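(* Let $\Lambda$ be a ring and $\Gamma$ a (not necessarily unital) subring of $\Lambda$ such that $\Lambda=\Gamma\oplus J(\Lambda)$ as additive groups, where $J(\Lambda)$ is the Jacobson radical of $\Lambda$. Then every central idempotent of $\Lambda$ lies in $\Gamma$. *)

theory Defs
  imports Main
begin

definition left_ideal :: "'a::ring_1 set \<Rightarrow> bool" where
  "left_ideal I \<longleftrightarrow> 0 \<in> I \<and> (\<forall>x\<in>I. \<forall>y\<in>I. x + y \<in> I) \<and> (\<forall>x\<in>I. - x \<in> I)
     \<and> (\<forall>r x. x \<in> I \<longrightarrow> r * x \<in> I)"

definition maximal_left_ideal :: "'a::ring_1 set \<Rightarrow> bool" where
  "maximal_left_ideal I \<longleftrightarrow> left_ideal I \<and> I \<noteq> UNIV \<and>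
     (\<forall>K. left_ideal K \<and> I \<subseteq> K \<and> K \<noteq> UNIV \<longrightarrow> K = I)"

definition jacobson_radical :: "'a::ring_1 set" where
  "jacobson_radical = \<Inter> {I. maximal_left_ideal I}"

definition nonunital_subring :: "'a::ring_1 set \<Rightarrow> bool" where
  "nonunital_subring S \<longleftrightarrow> 0 \<in> S \<and> (\<forall>x\<in>S. \<forall>y\<in>S. x + y \<in> S) \<and> (\<forall>x\<in>S. - x \<in> S)
     \<and> (\<forall>x\<in>S. \<forall>y\<in>S. x * y \<in> S)"

definition central_idempotent :: "'a::ring_1 \<Rightarrow> bool" where
  "central_idempotent e \<longleftrightarrow> e * e = e \<and> (\<forall>x. e * x = x * e)"

end

theory Submission
  imports Defs
begin

lemma li_union:
  assumes C: "C \<in> chains {K::'a::ring_1 set. left_ideal K \<and> L \<subseteq> K \<and> 1 \<notin> K}" and ne: "C \<noteq> {}"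
  shows "left_ideal (\<Union>C) \<and> L \<subseteq> \<Union>C \<and> 1 \<notin> \<Union>C"
proof -
  have sub: "\<And>K. K \<in> C \<Longrightarrow> left_ideal K \<and> L \<subseteq> K \<and> 1 \<notin> K" using chainsD2[OF C] by blast
  have add: "x + y \<in> \<Union>C" if "x \<in> \<Union>C" "y \<in> \<Union>C" for x y
  proof -
    from that obtain A B where AB: "A \<in> C" "B \<in> C" "x \<in> A" "y \<in> B" by blast
    from chainsD[OF C AB(1,2)] show ?thesis
    proof
      assume "A \<subseteq> B" thus ?thesis using AB sub[of B] unfolding left_ideal_def by blast
    next
      assume "B \<subseteq> A" thus ?thesis using AB sub[of A] unfolding left_ideal_def by blast
    qed
  qed
  obtain K0 where "K0 \<in> C" using ne by blast
  then show ?thesis using sub add unfolding left_ideal_def by blast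
qed

lemma exists_max:
  fixes L :: "'a::ring_1 set"
  assumes "left_ideal L" "1 \<notin> L"
  shows "\<exists>M. maximal_left_ideal M \<and> L \<subseteq> M"
proof -
  let ?A = "{K::'a set. left_ideal K \<and> L \<subseteq> K \<and> 1 \<notin> K}"
  have "\<forall>C\<in>chains ?A. \<exists>U\<in>?A. \<forall>X\<in>C. X \<subseteq> U"
  proof
    fix C assume C: "C \<in> chains ?A"
    show "\<exists>U\<in>?A. \<forall>X\<in>C. X \<subseteq> U"
    proof (cases "C = {}")
      case True thus ?thesis using assms by auto
    next
      case False
      from li_union[OF C False] show ?thesis by blast
    qed
  qed
  from Zorn_Lemma2[OF this] obtain M where M: "M \<in> ?A" "\<forall>X\<in>?A. M \<subseteq> X \<longrightarrow> X = M" by blast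
  have one: "1 \<notin> K" if "left_ideal K" "K \<noteq> UNIV" for K :: "'a set"
  proof
    assume "1 \<in> K"
    then have "\<forall>r. r * 1 \<in> K" using that(1) unfolding left_ideal_def by blast
    then show False using that(2) by auto
  qed
  have "maximal_left_ideal M"
    unfolding maximal_left_ideal_def
  proof (intro conjI allI impI)
    show "left_ideal M" using M by blast
    show "M \<noteq> UNIV" using M by blast
    fix K assume K: "left_ideal K \<and> M \<subseteq> K \<and> K \<noteq> UNIV"
    then have "K \<in> ?A" using M one[of K] by blast
    then show "K = M" using M K by blast
  qed
  then show ?thesis using M by blast
qed

lemma idem_in_J:
  fixes u :: "'a::ring_1"
  assumes uu: "u * u = u" and uJ: "u \<in> jacobson_radical"
  shows "u = 0"
proof (rule ccontr)
  assume nz: "u \<noteq> 0"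
  define L where "L = range (\<lambda>r. r * (1 - u))"
  have li: "left_ideal L" unfolding left_ideal_def
  proof (intro conjI ballI allI impI)
    show "0 \<in> L" unfolding L_def by (rule range_eqI[of _ _ 0]) simp
    fix x y assume "x \<in> L" "y \<in> L"
    then obtain a b where "x = a * (1 - u)" "y = b * (1 - u)" unfolding L_def by blast
    then have "x + y = (a + b) * (1 - u)" by (simp add: distrib_right)
    then show "x + y \<in> L" unfolding L_def by (rule range_eqI)
  next
    fix x assume "x \<in> L"
    then obtain a where "x = a * (1 - u)" unfolding L_def by blast
    then have "- x = (- a) * (1 - u)" by simp
    then show "- x \<in> L" unfolding L_def by (rule range_eqI)
  next
    fix r x assume "x \<in> L"
    then obtain a where "x = a * (1 - u)" unfolding L_def by blast
    then have "r * x = (r * a) * (1 - u)" by (simp add: mult.assoc)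
    then show "r * x \<in> L" unfolding L_def by (rule range_eqI)
  qed
  have z: "(1 - u) * u = 0" using uu by (simp add: left_diff_distrib)
  have n1: "1 \<notin> L"
  proof
    assume "1 \<in> L"
    then obtain r where r: "1 = r * (1 - u)" unfolding L_def by blast
    have "u = (r * (1 - u)) * u" using r by simp
    also have "\<dots> = r * ((1 - u) * u)" by (simp only: mult.assoc)
    also have "\<dots> = 0" by (simp only: z mult_zero_right)
    finally show False using nz by simp
  qed
  obtain M where M: "maximal_left_ideal M" "L \<subseteq> M" using exists_max[OF li n1] by blast
  have "M \<in> {I. maximal_left_ideal I}" using M(1) by simp
  then have uM: "u \<in> M" using uJ unfolding jacobson_radical_def by (rule InterD[rotated])
  have "1 - u \<in> L" unfolding L_def by (rule range_eqI[of _ _ 1]) simp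
  then have vM: "1 - u \<in> M" using M(2) by (rule subsetD[rotated])
  have liM: "left_ideal M" using M(1) by (simp add: maximal_left_ideal_def)
  then have addM: "\<forall>x\<in>M. \<forall>y\<in>M. x + y \<in> M" and mulM: "\<forall>r x. x \<in> M \<longrightarrow> r * x \<in> M"
    by (simp_all add: left_ideal_def)
  have "u + (1 - u) \<in> M" using addM uM vM by blast
  then have oneM: "1 \<in> M" by simp
  have "r \<in> M" for r
  proof -
    have "r * 1 \<in> M" using mulM oneM by blast
    then show ?thesis by simp
  qed
  then have "M = UNIV" by blast
  then show False using M(1) by (simp add: maximal_left_ideal_def)
qed

lemma J_mem: "x \<in> (jacobson_radical :: 'a::ring_1 set) \<longleftrightarrow> (\<forall>I. maximal_left_ideal I \<longrightarrow> x \<in> I)"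
  unfolding jacobson_radical_def by blast

lemma JL0: "x \<in> jacobson_radical \<Longrightarrow> r * x \<in> (jacobson_radical :: 'a::ring_1 set)"
proof -
  assume x: "x \<in> jacobson_radical"
  show ?thesis unfolding J_mem
  proof (intro allI impI)
    fix I :: "'a set" assume I: "maximal_left_ideal I"
    then have "left_ideal I" by (simp add: maximal_left_ideal_def)
    then have m: "\<forall>r x. x \<in> I \<longrightarrow> r * x \<in> I" by (simp add: left_ideal_def)
    have "x \<in> I" using x I unfolding J_mem by blast
    then show "r * x \<in> I" using m by blast
  qed
qed

lemma JA0: "x \<in> jacobson_radical \<Longrightarrow> y \<in> jacobson_radical \<Longrightarrow> x + y \<in> (jacobson_radical :: 'a::ring_1 set)"
proof -
  assume x: "x \<in> jacobson_radical" and y: "y \<in> jacobson_radical"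
  show ?thesis unfolding J_mem
  proof (intro allI impI)
    fix I :: "'a set" assume I: "maximal_left_ideal I"
    then have "left_ideal I" by (simp add: maximal_left_ideal_def)
    then have m: "\<forall>x\<in>I. \<forall>y\<in>I. x + y \<in> I" by (simp add: left_ideal_def)
    have "x \<in> I" "y \<in> I" using x y I unfolding J_mem by blast+
    then show "x + y \<in> I" using m by blast
  qed
qed

lemma sq: "((a::'a::ring_1) - b) * (a - b) = a * a - a * b - b * a + b * b"
  by (simp add: algebra_simps)
lemma X1: "((e::'a::ring_1) - j) * (e - j) - (e - j) = j * j - e * j - j * e + j" if "e * e = e"
  using that by (simp add: algebra_simps)
lemma X2: "e - (j::'a::ring_1) - (e - j) * e = e - j - e * e + j * e"
  by (simp add: algebra_simps)
lemma X3: "e - (j::'a::ring_1) - e * e + j * e = (e - 1) * j" if "e*e = e" "e * j = j * e"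
  using that by (simp add: algebra_simps)
lemma X4: "j * j - e * j - e * j + (j::'a::ring_1) = j * j + (- (2 * e) * j) + j"
  by (simp add: algebra_simps mult_2)

lemma X5: "(e::'a::ring_1) - e * (e - j) = e * j" if "e * e = e"
  using that by (simp add: algebra_simps)

theorem lemma5p2:
  fixes \<Gamma> :: "'a::ring_1 set"
  assumes "nonunital_subring \<Gamma>"
    and "\<Gamma> \<inter> jacobson_radical = {0}"
    and "\<forall>x. \<exists>g\<in>\<Gamma>. \<exists>j\<in>jacobson_radical. x = g + j"
    and "central_idempotent e"
  shows "e \<in> \<Gamma>"
proof -
  obtain g j where g: "g \<in> \<Gamma>" and j: "j \<in> jacobson_radical" and ej: "e = g + j" using assms(3) by blast
  have ce: "e * e = e \<and> (\<forall>x. e * x = x * e)" using assms(4) unfolding central_idempotent_def .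
  have ee: "e * e = e" using ce by (rule conjunct1)
  have ec: "\<And>x. e * x = x * e" using conjunct2[OF ce] by (rule spec)
  have JL: "\<And>r x. x \<in> jacobson_radical \<Longrightarrow> r * x \<in> (jacobson_radical :: 'a set)" by (rule JL0)
  have JA: "\<And>x y. x \<in> jacobson_radical \<Longrightarrow> y \<in> jacobson_radical \<Longrightarrow> x + y \<in> (jacobson_radical :: 'a set)" by (rule JA0)
  have Gd: "0 \<in> \<Gamma> \<and> (\<forall>x\<in>\<Gamma>. \<forall>y\<in>\<Gamma>. x + y \<in> \<Gamma>) \<and> (\<forall>x\<in>\<Gamma>. - x \<in> \<Gamma>)
     \<and> (\<forall>x\<in>\<Gamma>. \<forall>y\<in>\<Gamma>. x * y \<in> \<Gamma>)" using assms(1) unfolding nonunital_subring_def .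
  have GM: "\<And>x y. x \<in> \<Gamma> \<Longrightarrow> y \<in> \<Gamma> \<Longrightarrow> x * y \<in> \<Gamma>" using Gd by blast
  have GA: "\<And>x y. x \<in> \<Gamma> \<Longrightarrow> y \<in> \<Gamma> \<Longrightarrow> x + y \<in> \<Gamma>" using Gd by blast
  have GN: "\<And>x. x \<in> \<Gamma> \<Longrightarrow> - x \<in> \<Gamma>" using Gd by blast
  have gd: "g = e - j" using ej by simp
  have "g * g - g = j * j - e * j - j * e + j"
    unfolding gd using ee by (rule X1)
  also have "\<dots> = j * j - e * j - e * j + j" by (simp only: ec[of j, symmetric])
  also have "\<dots> = j * j + (- (2 * e) * j) + j" by (rule X4)
  finally have eq: "g * g - g = j * j + (- (2 * e) * j) + j" .
  have "g * g - g \<in> jacobson_radical" unfolding eq using j JL JA by blast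
  moreover have "g * g - g \<in> \<Gamma>" unfolding diff_conv_add_uminus by (intro GA GM GN g)
  ultimately have "g * g - g \<in> \<Gamma> \<inter> jacobson_radical" by blast
  then have "g * g - g = 0" using assms(2) by blast
  then have gg: "g * g = g" by simp
  have gec: "g * e = e * g" using ec[of g] by simp
  have u1: "(e - e * g) * (e - e * g) = e - e * g"
  proof -
    have "(e - e * g) * (e - e * g) = e * e - e * (e * g) - (e * g) * e + (e * g) * (e * g)"
      by (rule sq)
    also have "\<dots> = e - e * g - e * g + e * g"
    proof -
      have 1: "e * (e * g) = e * g" by (simp add: mult.assoc[symmetric] ee)
      have 2: "(e * g) * e = e * g" using 1 by (simp add: mult.assoc gec)
      have "(e * g) * (e * g) = ((e * g) * e) * g" by (simp only: mult.assoc)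
      also have "\<dots> = (e * g) * g" by (simp only: 2)
      also have "\<dots> = e * (g * g)" by (simp only: mult.assoc)
      finally have 3: "(e * g) * (e * g) = e * g" by (simp only: gg)
      show ?thesis by (simp only: 1 2 3 ee)
    qed
    finally show ?thesis by simp
  qed
  have "e - e * g = e * j" unfolding gd using ee by (rule X5)
  then have "e - e * g \<in> jacobson_radical" using JL j by simp
  with u1 have "e - e * g = 0" by (rule idem_in_J)
  then have a: "e * g = e" by simp
  have v1: "(g - g * e) * (g - g * e) = g - g * e"
  proof -
    have "(g - g * e) * (g - g * e) = g * g - g * (g * e) - (g * e) * g + (g * e) * (g * e)"
      by (rule sq)
    also have "\<dots> = g - g * e - g * e + g * e"
    proof -
      have 1: "g * (g * e) = g * e" by (simp add: mult.assoc[symmetric] gg)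
      have "(g * e) * g = (e * g) * g" by (simp only: gec)
      also have "\<dots> = e * (g * g)" by (simp only: mult.assoc)
      also have "\<dots> = g * e" by (simp only: gg gec)
      finally have 2: "(g * e) * g = g * e" .
      have "(g * e) * (g * e) = ((g * e) * g) * e" by (simp only: mult.assoc)
      also have "\<dots> = (g * e) * e" by (simp only: 2)
      also have "\<dots> = g * (e * e)" by (simp only: mult.assoc)
      finally have 3: "(g * e) * (g * e) = g * e" by (simp only: ee)
      show ?thesis by (simp only: 1 2 3 gg)
    qed
    finally show ?thesis by simp
  qed
  have "g - g * e = e - j - (e - j) * e" unfolding gd ..
  also have "\<dots> = e - j - e * e + j * e" by (rule X2)
  also have "\<dots> = (e - 1) * j" using ee ec[of j] by (rule X3)
  finally have "g - g * e = (e - 1) * j" .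
  then have "g - g * e \<in> jacobson_radical" using JL j by simp
  with v1 have "g - g * e = 0" by (rule idem_in_J)
  then have b: "g * e = g" by simp
  have "e = g" using a b gec by simp
  then show ?thesis using g by simp
qed

end
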